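(* Let $\theta>0$ and $\tilde D_n=\sum_{j=2}^n(\tilde C_j(n)-1)_+$, where $(x)_+=\max(0,x)$. Then, as $n\to\infty$, $$\mathbb{P}(\tilde D_n=0)\to\prod_{j\ge2}e^{-\theta/j}\Big(1+\frac{\theta}{j}\Big)=\frac{e^{-\theta(\gamma-1)}}{\Gamma(\theta+2)},$$ where $\gamma$ is Euler's constant. That is, the probability that a $\theta$-biased random derangement of $\{1,\ldots,n\}$ has all cycle lengths distinct converges to $e^{-\theta(\gamma-1)}/\Gamma(\theta+2)$.
   Context: Fix $\theta>0$. Write $\theta_{(m)}=\theta(\theta+1)\cdots(\theta+m-1)$. $\mathrm{ESF}(\theta)$ is the law of $(C_1(n),\ldots,C_n(n))$ with $\mathbb{P}(C_j(n)=c_j,\,1\le j\le n)=\frac{n!}{\theta_{(n)}}\prod_{j=1}^n(\theta/j)^{c_j}/c_j!$ whenever $\sum_j jc_j=n$ (cycle counts of a random permutation chosen with probability $\theta^k/\theta_{(n)}$ when it has $k$ cycles). The derangement cycle counts $(\tilde C_2(n),\ldots,\tilde C_n(n))$ have the law of $(C_2(n),\ldots,C_n(n))$ conditioned on $C_1(n)=0$. *)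

theory Defs
  imports "HOL-Analysis.Analysis"
begin

text \<open>Cycle-count vectors of size n: c j is the number of j-cycles; c j = 0 outside 1..n
  and the weighted sum is n.\<close>
definition cyc_vecs :: "nat \<Rightarrow> (nat \<Rightarrow> nat) set" where
  "cyc_vecs n = {c. (\<forall>j. c j \<noteq> 0 \<longrightarrow> j \<in> {1..n}) \<and> (\<Sum>j=1..n. j * c j) = n}"

text \<open>Ewens sampling formula ESF(theta) probability of the count vector c.\<close>
definition esf_prob :: "real \<Rightarrow> nat \<Rightarrow> (nat \<Rightarrow> nat) \<Rightarrow> real" where
  "esf_prob \<theta> n c = fact n / pochhammer \<theta> n *
     (\<Prod>j=1..n. (\<theta> / real j) ^ (c j) / fact (c j))"

definition esf_event :: "real \<Rightarrow> nat \<Rightarrow> ((nat \<Rightarrow> nat) \<Rightarrow> bool) \<Rightarrow> real" where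
  "esf_event \<theta> n P = (\<Sum>c\<in>{c\<in>cyc_vecs n. P c}. esf_prob \<theta> n c)"

text \<open>Law of the derangement cycle counts: ESF(theta) conditioned on C_1(n) = 0.\<close>
definition derange_prob :: "real \<Rightarrow> nat \<Rightarrow> ((nat \<Rightarrow> nat) \<Rightarrow> bool) \<Rightarrow> real" where
  "derange_prob \<theta> n P =
     esf_event \<theta> n (\<lambda>c. c 1 = 0 \<and> P c) / esf_event \<theta> n (\<lambda>c. c 1 = 0)"

text \<open>D tilde: sum over j=2..n of (c j - 1)_+ (truncated nat subtraction is the positive part).\<close>
definition D_tilde :: "nat \<Rightarrow> (nat \<Rightarrow> nat) \<Rightarrow> nat" where
  "D_tilde n c = (\<Sum>j=2..n. c j - 1)"

end

theory Submission
  imports Defs "HOL-Computational_Algebra.Formal_Power_Series"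
begin

unbundle no vec_syntax
notation fps_nth (infixl "$" 75)



definition Fp :: "nat \<Rightarrow> (nat \<Rightarrow> real) \<Rightarrow> real fps" where
  "Fp j f = Abs_fps (\<lambda>m. if j dvd m then f (m div j) else 0)"

definition Vs :: "nat \<Rightarrow> nat \<Rightarrow> (nat \<Rightarrow> nat) set" where
  "Vs N n = {c. (\<forall>j. c j \<noteq> 0 \<longrightarrow> j \<in> {1..N}) \<and> (\<Sum>j=1..N. j * c j) = n}"

lemma Fp_nth: "Fp j f $ m = (if j dvd m then f (m div j) else 0)"
  by (simp add: Fp_def)

lemma Vs_finite: "finite (Vs N n)"
proof -
  have "Vs N n \<subseteq> {c. \<forall>x. (x \<in> {1..N} \<longrightarrow> c x \<in> {0..n}) \<and> (x \<notin> {1..N} \<longrightarrow> c x = 0)}"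
  proof (safe)
    fix c x assume c: "c \<in> Vs N n" and x: "x \<in> {1..N}"
    have "x * c x \<le> (\<Sum>j=1..N. j * c j)" using x by (intro member_le_sum) auto
    also have "\<dots> = n" using c by (simp add: Vs_def)
    finally have "x * c x \<le> n" .
    moreover have "c x \<le> x * c x" using x by auto
    ultimately have "c x \<le> n" by linarith
    then show "c x \<in> {0..n}" by auto
  next
    fix c x assume c: "c \<in> Vs N n" and x: "x \<notin> {1..N}"
    then show "c x = 0" by (auto simp: Vs_def)
  qed
  moreover have "finite {c. \<forall>x. (x \<in> {1..N} \<longrightarrow> c x \<in> {0..n}) \<and> (x \<notin> {1..N} \<longrightarrow> c x = (0::nat))}"
    by (rule finite_set_of_finite_funs) auto
  ultimately show ?thesis by (rule finite_subset)
qed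

lemma Vs_0: "Vs 0 n = (if n = 0 then {\<lambda>_. 0} else {})"
  by (auto simp: Vs_def)

lemma Vs_sum_prod:
  "(\<Sum>c\<in>Vs N n. \<Prod>j=1..N. f j (c j)) = (\<Prod>j=1..N. Fp j (f j)) $ n"
proof (induction N arbitrary: n)
  case 0
  then show ?case by (simp add: Vs_0)
next
  case (Suc N)
  define K where "K = Suc N"
  define I where "I = {i\<in>{0..n}. K dvd (n - i)}"
  define P where "P = (\<lambda>c. \<Prod>j=1..N. f j (c j))"
  have RHS: "(\<Prod>j=1..Suc N. Fp j (f j)) $ n =
      (\<Sum>p\<in>Sigma I (Vs N). P (snd p) * f K ((n - fst p) div K))"
  proof -
    have "(\<Prod>j=1..Suc N. Fp j (f j)) $ n = ((\<Prod>j=1..N. Fp j (f j)) * Fp K (f K)) $ n"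
      by (simp add: K_def)
    also have "\<dots> =
       (\<Sum>i=0..n. (\<Sum>c\<in>Vs N i. P c) * (if K dvd (n - i) then f K ((n - i) div K) else 0))"
      unfolding fps_mult_nth Suc.IH[symmetric] Fp_nth P_def by simp
    also have "\<dots> = (\<Sum>i\<in>I. (\<Sum>c\<in>Vs N i. P c) * f K ((n - i) div K))"
      unfolding I_def by (subst sum.inter_filter) (auto intro!: sum.cong)
    also have "\<dots> = (\<Sum>i\<in>I. \<Sum>c\<in>Vs N i. P c * f K ((n - i) div K))"
      by (simp add: sum_distrib_right)
    also have "\<dots> = (\<Sum>p\<in>Sigma I (Vs N). P (snd p) * f K ((n - fst p) div K))"
      by (subst sum.Sigma) (auto simp: I_def Vs_finite split_beta intro!: sum.cong)
    finally show ?thesis .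
  qed
  have Kdiv: "K * x div K = x" for x unfolding K_def by (rule nonzero_mult_div_cancel_left) simp
  define h where "h = (\<lambda>c::nat\<Rightarrow>nat. (n - K * c K, c(K := 0)))"
  define h' where "h' = (\<lambda>p::nat \<times> (nat\<Rightarrow>nat). (snd p)(K := (n - fst p) div K))"
  have sumK: "(\<Sum>j=1..Suc N. j * c j) = (\<Sum>j=1..N. j * c j) + K * c K" for c :: "nat \<Rightarrow> nat"
    by (simp add: K_def)
  have sumN_upd: "(\<Sum>j=1..N. j * (c(K := v)) j) = (\<Sum>j=1..N. j * c j)" for c :: "nat \<Rightarrow> nat" and v
    by (intro sum.cong) (auto simp: K_def)
  have bij: "bij_betw h (Vs (Suc N) n) (Sigma I (Vs N))"
  proof (rule bij_betw_byWitness[where f' = h'])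
    show "\<forall>c\<in>Vs (Suc N) n. h' (h c) = c"
    proof
      fix c assume c: "c \<in> Vs (Suc N) n"
      then have "(\<Sum>j=1..N. j * c j) + K * c K = n" using sumK[of c] by (simp add: Vs_def)
      then have "(n - K * c K) = (\<Sum>j=1..N. j * c j)" by linarith
      then have "n - (n - K * c K) = K * c K"
        using \<open>(\<Sum>j=1..N. j * c j) + K * c K = n\<close> by linarith
      then have "(n - (n - K * c K)) div K = c K" by (simp only: Kdiv)
      then show "h' (h c) = c" by (auto simp: h_def h'_def)
    qed
    show "\<forall>p\<in>Sigma I (Vs N). h (h' p) = p"
    proof
      fix p assume p: "p \<in> Sigma I (Vs N)"
      obtain i c where pic: "p = (i, c)" by (cases p)
      with p have i: "i \<le> n" "K dvd (n - i)" and c: "c \<in> Vs N i" by (auto simp: I_def)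
      have cK: "c K = 0" using c by (auto simp: Vs_def K_def)
      have "K * ((n - i) div K) = n - i" using i by simp
      then have "n - K * ((n - i) div K) = i" using i by simp
      then show "h (h' p) = p" using cK by (auto simp: h_def h'_def pic)
    qed
    show "h ` Vs (Suc N) n \<subseteq> Sigma I (Vs N)"
    proof
      fix q assume "q \<in> h ` Vs (Suc N) n"
      then obtain c where c: "c \<in> Vs (Suc N) n" and q: "q = h c" by auto
      have s: "(\<Sum>j=1..N. j * c j) + K * c K = n" using c sumK[of c] by (simp add: Vs_def)
      have "n - K * c K \<in> I" using s by (auto simp: I_def)
      moreover have "c(K := 0) \<in> Vs N (n - K * c K)"
        using c s sumN_upd[of c 0] by (auto simp: Vs_def K_def le_Suc_eq)
      ultimately show "q \<in> Sigma I (Vs N)" by (simp add: q h_def)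
    qed
    show "h' ` Sigma I (Vs N) \<subseteq> Vs (Suc N) n"
    proof
      fix q assume "q \<in> h' ` Sigma I (Vs N)"
      then obtain i c where i: "i \<in> I" and c: "c \<in> Vs N i" and q: "q = h' (i, c)" by auto
      have i': "i \<le> n" "K dvd (n - i)" using i by (auto simp: I_def)
      have "K * ((n - i) div K) = n - i" using i' by simp
      have cs: "(\<Sum>j=1..N. j * c j) = i" using c by (simp add: Vs_def)
      have "(\<Sum>j=1..Suc N. j * q j) = (\<Sum>j=1..N. j * q j) + K * q K" by (rule sumK)
      also have "(\<Sum>j=1..N. j * q j) = i" using cs sumN_upd[of c] by (simp add: q h'_def)
      also have "K * q K = n - i" using \<open>K * ((n - i) div K) = n - i\<close> by (simp add: q h'_def)
      finally have "(\<Sum>j=1..Suc N. j * q j) = n" using i' by simp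
      moreover have "\<forall>j. q j \<noteq> 0 \<longrightarrow> j \<in> {1..Suc N}"
        using c by (auto simp: q h'_def Vs_def K_def le_Suc_eq)
      ultimately show "q \<in> Vs (Suc N) n" by (simp add: Vs_def)
    qed
  qed
  have "(\<Sum>c\<in>Vs (Suc N) n. \<Prod>j=1..Suc N. f j (c j)) =
        (\<Sum>c\<in>Vs (Suc N) n. P (snd (h c)) * f K ((n - fst (h c)) div K))"
  proof (intro sum.cong refl)
    fix c assume c: "c \<in> Vs (Suc N) n"
    have s: "(\<Sum>j=1..N. j * c j) + K * c K = n" using c sumK[of c] by (simp add: Vs_def)
    have "n - (n - K * c K) = K * c K" using s by linarith
    then have "(n - (n - K * c K)) div K = c K" by (simp only: Kdiv)
    moreover have "P (c(K := 0)) = P c" by (auto simp: P_def K_def intro!: prod.cong)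
    ultimately show "(\<Prod>j=1..Suc N. f j (c j)) = P (snd (h c)) * f K ((n - fst (h c)) div K)"
      by (simp add: h_def P_def K_def)
  qed
  also have "\<dots> = (\<Sum>p\<in>Sigma I (Vs N). P (snd p) * f K ((n - fst p) div K))"
    using bij by (rule sum.reindex_bij_betw)
  finally show ?case using RHS by simp
qed



lemma Fp_mult_same:
  assumes j: "j \<ge> 1"
  shows "Fp j f * Fp j g = Fp j (\<lambda>r. \<Sum>i=0..r. f i * g (r - i))"
proof (rule fps_ext)
  fix m
  have "(Fp j f * Fp j g) $ m =
     (\<Sum>i=0..m. (if j dvd i then f (i div j) else 0) * (if j dvd (m - i) then g ((m - i) div j) else 0))"
    by (simp add: fps_mult_nth Fp_nth)
  also have "\<dots> = (if j dvd m then (\<Sum>s=0..m div j. f s * g (m div j - s)) else 0)"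
  proof (cases "j dvd m")
    case False
    have "(if j dvd i then f (i div j) else 0) * (if j dvd (m - i) then g ((m - i) div j) else 0) = 0"
      if "i \<in> {0..m}" for i
    proof -
      have "\<not> (j dvd i \<and> j dvd (m - i))"
      proof
        assume "j dvd i \<and> j dvd (m - i)"
        then have "j dvd (i + (m - i))" by auto
        with that False show False by auto
      qed
      then show ?thesis by auto
    qed
    then show ?thesis using False by (metis (no_types, lifting) sum.neutral)
  next
    case True
    then obtain r where m: "m = j * r" by auto
    have rdiv: "m div j = r" using j m by simp
    have "(\<Sum>i=0..m. (if j dvd i then f (i div j) else 0) * (if j dvd (m - i) then g ((m - i) div j) else 0))
        = (\<Sum>i\<in>(\<lambda>s. j * s) ` {0..r}. (if j dvd i then f (i div j) else 0) * (if j dvd (m - i) then g ((m - i) div j) else 0))"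
    proof (rule sum.mono_neutral_right)
      show "finite {0..m}" by simp
      show "(\<lambda>s. j * s) ` {0..r} \<subseteq> {0..m}" using m by auto
      show "\<forall>i\<in>{0..m} - (\<lambda>s. j * s) ` {0..r}. (if j dvd i then f (i div j) else 0) * (if j dvd (m - i) then g ((m - i) div j) else 0) = 0"
      proof
        fix i assume i: "i \<in> {0..m} - (\<lambda>s. j * s) ` {0..r}"
        have "\<not> j dvd i"
        proof
          assume "j dvd i"
          then obtain s where "i = j * s" by auto
          moreover have "s \<le> r" using i j m \<open>i = j * s\<close> by auto
          ultimately show False using i by auto
        qed
        then show "(if j dvd i then f (i div j) else 0) * (if j dvd (m - i) then g ((m - i) div j) else 0) = 0" by simp
      qed
    qed
    also have "\<dots> = (\<Sum>s=0..r. f s * g (r - s))"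
    proof (subst sum.reindex)
      show "inj_on (\<lambda>s. j * s) {0..r}" using j by (auto simp: inj_on_def)
      show "(\<Sum>s\<in>{0..r}. ((\<lambda>i. (if j dvd i then f (i div j) else 0) * (if j dvd (m - i) then g ((m - i) div j) else 0)) \<circ> (\<lambda>s. j * s)) s) =
          (\<Sum>s = 0..r. f s * g (r - s))"
      proof (intro sum.cong refl)
        fix s assume s: "s \<in> {0..r}"
        have "m - j * s = j * (r - s)" using m by (simp add: right_diff_distrib')
        then show "((\<lambda>i. (if j dvd i then f (i div j) else 0) * (if j dvd (m - i) then g ((m - i) div j) else 0)) \<circ> (\<lambda>s. j * s)) s = f s * g (r - s)"
          using j by simp
      qed
    qed
    finally show ?thesis using True rdiv by simp
  qed
  also have "\<dots> = Fp j (\<lambda>r. \<Sum>i=0..r. f i * g (r - i)) $ m" by (simp add: Fp_nth)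
  finally show "(Fp j f * Fp j g) $ m = Fp j (\<lambda>r. \<Sum>i=0..r. f i * g (r - i)) $ m" .
qed

lemma Fp_delta: "j \<ge> 1 \<Longrightarrow> Fp j (\<lambda>r. if r = 0 then 1 else 0) = 1"
  by (rule fps_ext) (auto simp: Fp_nth elim!: dvdE)

definition w :: "real \<Rightarrow> nat \<Rightarrow> nat \<Rightarrow> real" where
  "w t j r = (t / real j) ^ r / fact r"

lemma exp_conv_sum:
  fixes x y :: real
  shows "(\<Sum>i=0..r. (x ^ i / fact i) * (y ^ (r - i) / fact (r - i))) = (x + y) ^ r / fact r"
proof -
  have "(x + y) ^ r = (\<Sum>i\<le>r. of_nat (r choose i) * x ^ i * y ^ (r - i))"
    by (rule binomial_ring)
  then have "(x + y) ^ r / fact r = (\<Sum>i\<le>r. of_nat (r choose i) * x ^ i * y ^ (r - i) / fact r)"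
    by (simp add: sum_divide_distrib)
  also have "\<dots> = (\<Sum>i\<le>r. (x ^ i / fact i) * (y ^ (r - i) / fact (r - i)))"
  proof (intro sum.cong refl)
    fix i assume "i \<in> {..r}"
    then have "i \<le> r" by simp
    then have "real (r choose i) = fact r / (fact i * fact (r - i))"
      by (simp add: binomial_fact)
    then show "of_nat (r choose i) * x ^ i * y ^ (r - i) / fact r = (x ^ i / fact i) * (y ^ (r - i) / fact (r - i))"
      by (simp add: field_simps)
  qed
  finally show ?thesis by (simp add: atMost_atLeast0)
qed

lemma Fp_w_inverse: "j \<ge> 1 \<Longrightarrow> Fp j (w t j) * Fp j (w (-t) j) = 1"
proof -
  assume j: "j \<ge> 1"
  have "(\<lambda>r. \<Sum>i=0..r. w t j i * w (-t) j (r - i)) = (\<lambda>r. if r = 0 then 1 else 0)"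
  proof
    fix r
    have "(\<Sum>i=0..r. w t j i * w (-t) j (r - i)) = (t / real j + (-t) / real j) ^ r / fact r"
      unfolding w_def by (rule exp_conv_sum)
    then show "(\<Sum>i=0..r. w t j i * w (-t) j (r - i)) = (if r = 0 then 1 else 0)" by simp
  qed
  then show ?thesis using j by (simp add: Fp_mult_same Fp_delta)
qed



definition E :: "real \<Rightarrow> nat \<Rightarrow> real fps" where
  "E t N = (\<Prod>j=1..N. Fp j (w t j))"

definition a :: "real \<Rightarrow> nat \<Rightarrow> real" where
  "a t n = pochhammer t n / fact n"

lemma deriv_Fp:
  assumes j: "j \<ge> 1"
  shows "fps_deriv (Fp j (w t j)) = fps_const t * (fps_X ^ (j - 1) * Fp j (w t j))"
proof (rule fps_ext)
  fix m
  show "fps_deriv (Fp j (w t j)) $ m = (fps_const t * (fps_X ^ (j - 1) * Fp j (w t j))) $ m"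
  proof (cases "j dvd (m + 1)")
    case True
    then obtain r where r: "m + 1 = j * r" by auto
    have r1: "r \<ge> 1" using r by (cases r) auto
    have jr: "j \<le> j * r" using r1 by simp
    have m1: "\<not> m < j - 1" using r jr by linarith
    have "m - (j - 1) = j * r - j" using r jr j by linarith
    also have "\<dots> = j * (r - 1)" by (simp add: right_diff_distrib')
    finally have md: "m - (j - 1) = j * (r - 1)" .
    have "fps_deriv (Fp j (w t j)) $ m = real (m + 1) * ((t / real j) ^ r / fact r)"
      using r j by (simp add: Fp_nth w_def)
    also have "\<dots> = real j * real r * ((t / real j) ^ r / fact r)" using arg_cong[OF r, of real] by (simp only: of_nat_mult)
    also have "\<dots> = t * ((t / real j) ^ (r - 1) / fact (r - 1))"
    proof -
      obtain q where q: "r = Suc q" using r1 by (cases r) auto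
      have hlp0: "J * s * (x * y / (s * f)) = (J * x) * (y / f)"
        if "f > 0" "s > 0" for J s x y f :: real using that by (simp add: field_simps)
      have hlp: "real j * real (Suc q) * (x * y / (real (Suc q) * f)) = (real j * x) * (y / f)"
        if "f > 0" for x y f :: real by (rule hlp0) (use that in auto)
      have jt: "real j * (t / real j) = t" using j by simp
      have "real j * real r * ((t / real j) ^ r / fact r) =
            real j * real (Suc q) * ((t / real j) * (t / real j) ^ q / (real (Suc q) * fact q))"
        by (simp only: q power_Suc fact_Suc of_nat_mult)
      also have "\<dots> = (real j * (t / real j)) * ((t / real j) ^ q / fact q)"
        by (rule hlp) simp
      finally show ?thesis by (simp only: jt q diff_Suc_1)
    qed
    also have "\<dots> = (fps_const t * (fps_X ^ (j - 1) * Fp j (w t j))) $ m"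
      using m1 md j by (simp add: fps_X_power_mult_nth Fp_nth w_def)
    finally show ?thesis .
  next
    case False
    have "\<not> (\<not> m < j - 1 \<and> j dvd (m - (j - 1)))"
    proof
      assume h: "\<not> m < j - 1 \<and> j dvd (m - (j - 1))"
      then have "j dvd (m - (j - 1) + j)" using dvd_add_left_iff dvd_refl by blast
      moreover have "m - (j - 1) + j = m + 1" using h j by auto
      ultimately show False using False by simp
    qed
    then show ?thesis using False by (auto simp: fps_X_power_mult_nth Fp_nth)
  qed
qed

lemma deriv_E: "fps_deriv (E t N) = fps_const t * (\<Sum>j<N. fps_X ^ j) * E t N"
proof (induction N)
  case 0
  then show ?case by (simp add: E_def)
next
  case (Suc N)
  have "E t (Suc N) = E t N * Fp (Suc N) (w t (Suc N))" by (simp add: E_def)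
  then have "fps_deriv (E t (Suc N)) =
      E t N * (fps_const t * (fps_X ^ N * Fp (Suc N) (w t (Suc N)))) +
      fps_const t * (\<Sum>j<N. fps_X ^ j) * E t N * Fp (Suc N) (w t (Suc N))"
    using deriv_Fp[of "Suc N" t] Suc.IH by simp
  also have "\<dots> = fps_const t * (\<Sum>j<Suc N. fps_X ^ j) * (E t N * Fp (Suc N) (w t (Suc N)))"
    by (simp add: algebra_simps)
  finally show ?case by (simp add: E_def)
qed

lemma E_0: "E t N $ 0 = 1"
proof (induction N)
  case 0
  then show ?case by (simp add: E_def)
next
  case (Suc N)
  have "E t (Suc N) = E t N * Fp (Suc N) (w t (Suc N))" by (simp add: E_def)
  then show ?case using Suc.IH by (simp add: Fp_nth w_def)
qed

lemma E_rec:
  assumes "n < N"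
  shows "real (n + 1) * E t N $ (n + 1) = t * (\<Sum>m=0..n. E t N $ m)"
proof -
  have "real (n + 1) * E t N $ (n + 1) = fps_deriv (E t N) $ n" by simp
  also have "\<dots> = t * ((\<Sum>j<N. fps_X ^ j) * E t N) $ n"
    by (simp add: deriv_E mult.assoc)
  also have "((\<Sum>j<N. fps_X ^ j) * E t N) $ n = (\<Sum>j<N. (if n < j then 0 else E t N $ (n - j)))"
    by (simp add: sum_distrib_right fps_sum_nth fps_X_power_mult_nth)
  also have "\<dots> = (\<Sum>j<n+1. E t N $ (n - j))"
    using assms by (intro sum.mono_neutral_cong_right) auto
  also have "\<dots> = (\<Sum>j<n+1. E t N $ (n + 1 - Suc j))" by simp
  also have "\<dots> = (\<Sum>j<n+1. E t N $ j)" by (rule sum.nat_diff_reindex)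
  also have "\<dots> = (\<Sum>m=0..n. E t N $ m)" by (simp add: atLeast0AtMost lessThan_Suc_atMost)
  finally show ?thesis .
qed

lemma a_0: "a t 0 = 1" by (simp add: a_def)

lemma a_Suc: "a t (Suc n) = a t n * (t + real n) / real (Suc n)"
  by (simp add: a_def pochhammer_rec' field_simps)

lemma a_sum: "t * (\<Sum>m=0..n. a t m) = real (n + 1) * a t (n + 1)"
proof (induction n)
  case 0
  then show ?case by (simp add: a_def)
next
  case (Suc n)
  have "t * (\<Sum>m=0..Suc n. a t m) = real (n + 1) * a t (n + 1) + t * a t (Suc n)"
    using Suc.IH by (simp add: algebra_simps)
  also have "\<dots> = a t (Suc n) * (t + real (Suc n))" by (simp add: algebra_simps)
  also have "\<dots> = real (Suc n + 1) * a t (Suc n + 1)"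
    using a_Suc[of t "Suc n"] by (simp add: field_simps)
  finally show ?case .
qed

lemma E_eq_a: "n \<le> N \<Longrightarrow> E t N $ n = a t n"
proof (induction n rule: less_induct)
  case (less n)
  show ?case
  proof (cases n)
    case 0
    then show ?thesis by (simp add: E_0 a_0)
  next
    case (Suc k)
    have "real (k + 1) * E t N $ (k + 1) = t * (\<Sum>m=0..k. E t N $ m)"
      using less.prems Suc by (intro E_rec) auto
    also have "(\<Sum>m=0..k. E t N $ m) = (\<Sum>m=0..k. a t m)"
      using less Suc by (intro sum.cong) auto
    also have "t * \<dots> = real (k + 1) * a t (k + 1)" by (rule a_sum)
    finally have "real (k + 1) * E t N $ (k + 1) = real (k + 1) * a t (k + 1)" .
    then show ?thesis using Suc by simp
  qed
qed



lemma a_pos: "t > 0 \<Longrightarrow> a t n > 0"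
  by (simp add: a_def pochhammer_pos)

lemma a_weighted_step: "t > 0 \<Longrightarrow> real n * a t n \<le> real (Suc n) * a t (Suc n)"
proof -
  assume t: "t > 0"
  have "real (Suc n) * a t (Suc n) = a t n * (t + real n)" by (simp add: a_Suc)
  also have "\<dots> \<ge> a t n * real n" using a_pos[OF t, of n] t by (intro mult_left_mono) auto
  finally show ?thesis by (simp add: mult.commute)
qed

lemma a_weighted_mono: "t > 0 \<Longrightarrow> m \<le> n \<Longrightarrow> real m * a t m \<le> real n * a t n"
proof (induction n)
  case 0
  then show ?case by simp
next
  case (Suc n)
  show ?case
  proof (cases "m = Suc n")
    case True then show ?thesis by simp
  next
    case False
    then have "m \<le> n" using Suc.prems by simp
    then show ?thesis using Suc a_weighted_step[of t n] by linarith
  qed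
qed

lemma a_ratio_bound:
  assumes t: "t > 0" and k: "k \<le> n"
  shows "a t (n - k) \<le> (real k + 1) * (1 + 1 / t) * a t n"
proof (cases "n - k = 0")
  case True
  then have nk: "n = k" using k by simp
  show ?thesis
  proof (cases "n = 0")
    case True
    then show ?thesis using nk t by (simp add: a_0)
  next
    case False
    have "real 1 * a t 1 \<le> real n * a t n" using False t by (intro a_weighted_mono) auto
    then have an: "t \<le> real n * a t n" by (simp add: a_Suc a_0)
    have "1 \<le> (real n + 1) * (1 / t) * a t n"
    proof -
      have "1 \<le> real n * a t n / t" using an t by simp
      also have "\<dots> \<le> (real n + 1) * a t n / t" using a_pos[OF t, of n] t
        by (intro divide_right_mono mult_right_mono) auto
      finally show ?thesis by simp
    qed
    also have "\<dots> \<le> (real n + 1) * (1 + 1 / t) * a t n"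
      using a_pos[OF t, of n] t by (intro mult_right_mono mult_left_mono) auto
    finally show ?thesis using True nk by (simp add: a_0)
  qed
next
  case False
  define m where "m = n - k"
  have m1: "m \<ge> 1" using False by (simp add: m_def)
  have w: "real m * a t m \<le> real n * a t n" using t by (intro a_weighted_mono) (auto simp: m_def)
  have nm: "real n \<le> (real k + 1) * real m"
  proof -
    have "n = m + k" using k by (simp add: m_def)
    moreover have "real k * 1 \<le> real k * real m" using m1 by (intro mult_left_mono) auto
    ultimately show ?thesis by (simp add: algebra_simps)
  qed
  have "a t m \<le> real n * a t n / real m" using w m1 by (simp add: field_simps)
  also have "\<dots> \<le> (real k + 1) * real m * a t n / real m"
    using nm a_pos[OF t, of n] m1 by (intro divide_right_mono mult_right_mono) auto
  also have "\<dots> = (real k + 1) * a t n" using m1 by simp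
  also have "\<dots> \<le> (real k + 1) * (1 + 1 / t) * a t n"
    using a_pos[OF t, of n] t by (simp add: algebra_simps)
  finally show ?thesis by (simp add: m_def)
qed

lemma a_half_bound:
  assumes t: "t > 0" and "m \<le> n" "n \<le> 2 * m"
  shows "a t m \<le> 2 * a t n"
proof (cases "m = 0")
  case True
  then have "n = 0" using assms by simp
  then show ?thesis using True a_pos[OF t, of 0] by simp
next
  case False
  have w: "real m * a t m \<le> real n * a t n" using t assms by (intro a_weighted_mono) auto
  have "real n * a t n \<le> (2 * real m) * a t n" using assms a_pos[OF t, of n]
    by (intro mult_right_mono) auto
  with w have "real m * a t m \<le> real m * (2 * a t n)" by (simp add: algebra_simps)
  then show ?thesis using False by simp
qed

lemma a_sum_eq: "t > 0 \<Longrightarrow> (\<Sum>m=0..n. a t m) = a t n * (t + real n) / t"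
proof -
  assume t: "t > 0"
  have "t * (\<Sum>m=0..n. a t m) = real (n + 1) * a t (n + 1)" by (rule a_sum)
  also have "\<dots> = a t n * (t + real n)" by (simp add: a_Suc)
  finally show ?thesis using t by (simp add: field_simps)
qed

lemma a_ratio_step_lim: "t > 0 \<Longrightarrow> (\<lambda>n. a t n / a t (Suc n)) \<longlonglongrightarrow> 1"
proof -
  assume t: "t > 0"
  have eq: "a t n / a t (Suc n) = 1 / (1 + (t - 1) * (1 / real (Suc n)))" for n
  proof -
    have hlp: "x / (x * y / S) = S / y" if "x > 0" "y > 0" "S > 0" for x y S :: real
      using that by (simp add: field_simps)
    have "a t n / a t (Suc n) = real (Suc n) / (t + real n)"
      unfolding a_Suc using a_pos[OF t, of n] t by (intro hlp) auto
    also have "\<dots> = 1 / (1 + (t - 1) * (1 / real (Suc n)))"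
      using t by (simp add: field_simps)
    finally show ?thesis .
  qed
  have l1: "(\<lambda>n. 1 / real (Suc n)) \<longlonglongrightarrow> 0"
    using LIMSEQ_Suc[OF lim_1_over_n] by simp
  have "(\<lambda>n. 1 / (1 + (t - 1) * (1 / real (Suc n)))) \<longlonglongrightarrow> 1 / (1 + (t - 1) * 0)"
    using l1 by (intro tendsto_intros) auto
  then show ?thesis by (simp add: eq)
qed

lemma a_ratio_shift_lim: "t > 0 \<Longrightarrow> (\<lambda>n. a t n / a t (n + k)) \<longlonglongrightarrow> 1"
proof (induction k)
  case 0
  have "(\<lambda>n. a t n / a t (n + 0)) = (\<lambda>n. 1)"
  proof -
    have "\<forall>n. a t n \<noteq> 0" using a_pos[OF "0.prems"] by (metis less_irrefl)
    then show ?thesis by auto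
  qed
  then show ?case by simp
next
  case (Suc k)
  have "(\<lambda>n. a t (n + k) / a t (Suc (n + k))) \<longlonglongrightarrow> 1"
    using LIMSEQ_ignore_initial_segment[OF a_ratio_step_lim[OF Suc.prems], of k] by simp
  then have "(\<lambda>n. (a t n / a t (n + k)) * (a t (n + k) / a t (Suc (n + k)))) \<longlonglongrightarrow> 1 * 1"
    using Suc by (intro tendsto_mult) auto
  moreover have "(\<lambda>n. (a t n / a t (n + k)) * (a t (n + k) / a t (Suc (n + k)))) = (\<lambda>n. a t n / a t (n + Suc k))"
  proof
    fix n
    have "a t (n + k) \<noteq> 0" using a_pos[OF Suc.prems, of "n + k"] by simp
    then show "(a t n / a t (n + k)) * (a t (n + k) / a t (Suc (n + k))) = a t n / a t (n + Suc k)"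
      by simp
  qed
  ultimately show ?case by (simp only: mult_1)
qed

lemma a_ratio_lim: "t > 0 \<Longrightarrow> (\<lambda>n. a t (n - k) / a t n) \<longlonglongrightarrow> 1"
  by (rule LIMSEQ_offset[of _ k]) (use a_ratio_shift_lim[of t k] in simp)

lemma conv_lim:
  fixes g :: "nat \<Rightarrow> real"
  assumes t: "t > 0" and sg: "summable (\<lambda>i. \<bar>g i\<bar> * (real i + 1))"
  shows "(\<lambda>n. (\<Sum>i=0..n. g i * a t (n - i)) / a t n) \<longlonglongrightarrow> suminf g"
proof -
  define A where "A = (\<lambda>i n. if i \<le> n then g i * (a t (n - i) / a t n) else 0)"
  define M where "M = (\<lambda>i. \<bar>g i\<bar> * (real i + 1) * (1 + 1 / t))"
  have lim: "(\<lambda>n. A i n) \<longlonglongrightarrow> g i" for i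
  proof -
    have "(\<lambda>n. g i * (a t (n - i) / a t n)) \<longlonglongrightarrow> g i * 1"
      by (intro tendsto_mult tendsto_const a_ratio_lim t)
    moreover have "eventually (\<lambda>n. g i * (a t (n - i) / a t n) = A i n) sequentially"
      using eventually_ge_at_top[of i] by eventually_elim (simp add: A_def)
    ultimately show ?thesis by (simp add: tendsto_cong)
  qed
  have bound: "norm (A i n) \<le> M i" for i n
  proof (cases "i \<le> n")
    case True
    have "a t (n - i) / a t n \<le> (real i + 1) * (1 + 1 / t)"
      using a_ratio_bound[OF t True] a_pos[OF t, of n] by (simp add: field_simps)
    moreover have "a t (n - i) / a t n \<ge> 0" using a_pos[OF t] by (simp add: less_imp_le)
    ultimately have "\<bar>g i\<bar> * \<bar>a t (n - i) / a t n\<bar> \<le> \<bar>g i\<bar> * ((real i + 1) * (1 + 1 / t))"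
      by (intro mult_left_mono) auto
    then show ?thesis using True
      by (simp add: A_def M_def abs_mult mult.assoc)
  next
    case False
    then show ?thesis using t by (simp add: A_def M_def)
  qed
  have sM: "summable M" unfolding M_def by (intro summable_mult2 sg)
  have T: "((\<lambda>n. suminf (\<lambda>i. A i n)) \<longlonglongrightarrow> suminf g)"
    using tannerys_theorem[where a=A and b=g and M=M and F=sequentially, OF lim _ sM] bound
    by (auto intro: always_eventually)
  have "suminf (\<lambda>i. A i n) = (\<Sum>i=0..n. g i * a t (n - i)) / a t n" for n
  proof -
    have "suminf (\<lambda>i. A i n) = (\<Sum>i\<in>{0..n}. A i n)"
      by (rule suminf_finite) (auto simp: A_def)
    also have "\<dots> = (\<Sum>i=0..n. g i * a t (n - i)) / a t n"
      by (simp add: A_def sum_divide_distrib)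
    finally show ?thesis .
  qed
  with T show ?thesis by simp
qed



definition WS :: "real fps \<Rightarrow> bool" where
  "WS p \<longleftrightarrow> summable (\<lambda>i. \<bar>p $ i\<bar> * (real i + 1))"

lemma WS_mult:
  assumes p: "WS p" and q: "WS q"
  shows "WS (p * q)"
    and "summable (\<lambda>i. \<bar>p $ i\<bar>)"
    and "(\<lambda>i. (p * q) $ i) sums (suminf (\<lambda>i. p $ i) * suminf (\<lambda>i. q $ i))"
proof -
  define u where "u = (\<lambda>i. \<bar>p $ i\<bar> * (real i + 1))"
  define v where "v = (\<lambda>i. \<bar>q $ i\<bar> * (real i + 1))"
  have su: "summable u" and sv: "summable v" using p q by (auto simp: WS_def u_def v_def)
  have nu: "summable (\<lambda>i. norm (u i))" using su by (simp add: u_def)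
  have nv: "summable (\<lambda>i. norm (v i))" using sv by (simp add: v_def)
  have sc: "summable (\<lambda>k. \<Sum>i\<le>k. u i * v (k - i))"
    using summable_Cauchy_product[OF nu nv] .
  have bnd: "\<bar>(p * q) $ k\<bar> * (real k + 1) \<le> (\<Sum>i\<le>k. u i * v (k - i))" for k
  proof -
    have "\<bar>(p * q) $ k\<bar> * (real k + 1) = \<bar>\<Sum>i\<le>k. p $ i * q $ (k - i)\<bar> * (real k + 1)"
      by (simp add: fps_mult_nth atLeast0AtMost)
    also have "\<dots> \<le> (\<Sum>i\<le>k. \<bar>p $ i\<bar> * \<bar>q $ (k - i)\<bar>) * (real k + 1)"
      by (intro mult_right_mono) (auto intro: order_trans[OF sum_abs] simp: abs_mult)
    also have "\<dots> = (\<Sum>i\<le>k. \<bar>p $ i\<bar> * \<bar>q $ (k - i)\<bar> * (real k + 1))"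
      by (simp add: sum_distrib_right)
    also have "\<dots> \<le> (\<Sum>i\<le>k. u i * v (k - i))"
    proof (intro sum_mono)
      fix i assume "i \<in> {..k}"
      then have ik: "i \<le> k" by simp
      have d: "real (k - i) = real k - real i" using ik by simp
      have e: "(real i + 1) * (real k - real i + 1) = real k + 1 + real i * (real k - real i)"
        by (simp add: algebra_simps)
      have f: "real i * (real k - real i) \<ge> 0" using ik by simp
      have "real k + 1 \<le> (real i + 1) * (real (k - i) + 1)"
        unfolding d e using f by linarith
      then have "\<bar>p $ i\<bar> * \<bar>q $ (k - i)\<bar> * (real k + 1) \<le>
                 \<bar>p $ i\<bar> * \<bar>q $ (k - i)\<bar> * ((real i + 1) * (real (k - i) + 1))"
        by (intro mult_left_mono) auto
      then show "\<bar>p $ i\<bar> * \<bar>q $ (k - i)\<bar> * (real k + 1) \<le> u i * v (k - i)"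
        by (simp add: u_def v_def algebra_simps)
    qed
    finally show ?thesis by simp
  qed
  show "WS (p * q)" unfolding WS_def
    by (rule summable_comparison_test[OF _ sc]) (auto intro!: exI[of _ 0] bnd)
  have ap: "summable (\<lambda>i. norm (p $ i))"
    by (rule summable_comparison_test[OF _ su]) (auto simp: u_def mult_le_cancel_left1 intro!: exI[of _ 0])
  then show "summable (\<lambda>i. \<bar>p $ i\<bar>)" by simp
  have aq: "summable (\<lambda>i. norm (q $ i))"
    by (rule summable_comparison_test[OF _ sv]) (auto simp: v_def mult_le_cancel_left1 intro!: exI[of _ 0])
  have "(\<lambda>k. \<Sum>i\<le>k. p $ i * q $ (k - i)) sums (suminf (\<lambda>i. p $ i) * suminf (\<lambda>i. q $ i))"
    using Cauchy_product_sums[OF ap aq] .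
  then show "(\<lambda>i. (p * q) $ i) sums (suminf (\<lambda>i. p $ i) * suminf (\<lambda>i. q $ i))"
    by (simp add: fps_mult_nth atLeast0AtMost)
qed

lemma Fp_WS:
  assumes j: "j \<ge> 1" and s: "summable (\<lambda>r. \<bar>f r\<bar> * (real j * real r + 1))"
  shows "WS (Fp j f)" and "(\<lambda>i. Fp j f $ i) sums suminf f"
proof -
  have sm: "strict_mono (\<lambda>r. j * r)" using j by (auto simp: strict_mono_def)
  have zero: "Fp j f $ i = 0" if "i \<notin> range (\<lambda>r. j * r)" for i
    using that by (auto simp: Fp_nth elim!: dvdE)
  have re: "Fp j f $ (j * r) = f r" for r using j by (simp add: Fp_nth)
  have "(\<lambda>r. \<bar>Fp j f $ (j * r)\<bar> * (real (j * r) + 1)) sums (suminf (\<lambda>r. \<bar>f r\<bar> * (real j * real r + 1)))"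
    using summable_sums[OF s] by (simp add: re)
  then have "(\<lambda>i. \<bar>Fp j f $ i\<bar> * (real i + 1)) sums (suminf (\<lambda>r. \<bar>f r\<bar> * (real j * real r + 1)))"
    by (subst sums_mono_reindex[OF sm, symmetric]) (auto simp: zero)
  then show "WS (Fp j f)" unfolding WS_def by (rule sums_summable)
  have sf: "summable f"
    by (rule summable_comparison_test[OF _ s]) (auto intro!: exI[of _ 0] simp: mult_le_cancel_left1)
  have "(\<lambda>r. Fp j f $ (j * r)) sums suminf f" using summable_sums[OF sf] by (simp add: re)
  then show "(\<lambda>i. Fp j f $ i) sums suminf f"
    by (subst sums_mono_reindex[OF sm, symmetric]) (auto simp: zero)
qed

lemma w_sums: "(\<lambda>r. w t j r) sums exp (t / real j)"
  using exp_converges[of "t / real j"] by (simp add: w_def divide_inverse mult.commute)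

lemma w_weighted_summable:
  assumes j: "j \<ge> 1"
  shows "summable (\<lambda>r. \<bar>w t j r\<bar> * (real j * real r + 1))"
proof -
  define x where "x = 2 * \<bar>t\<bar> / real j"
  have se: "summable (\<lambda>r. real j * (x ^ r / fact r))"
    using summable_mult[OF summable_exp[of x], of "real j"]
    by (simp add: divide_inverse mult.commute)
  show ?thesis
  proof (rule summable_comparison_test[OF _ se], intro exI[of _ 0] allI impI)
    fix r :: nat
    have r2: "real r + 1 \<le> 2 ^ r"
    proof -
      have "r + 1 \<le> 2 ^ r" using less_exp[of r] by (metis Suc_eq_plus1 Suc_leI)
      then have "real (r + 1) \<le> real (2 ^ r)" by (rule of_nat_mono)
      then show ?thesis by simp
    qed
    have jr: "real j * real r + 1 \<le> real j * (real r + 1)" using j by (simp add: algebra_simps)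
    have "\<bar>w t j r\<bar> * (real j * real r + 1) \<le> \<bar>w t j r\<bar> * (real j * (real r + 1))"
      by (intro mult_left_mono jr) auto
    also have "\<dots> \<le> \<bar>w t j r\<bar> * (real j * 2 ^ r)"
      using j by (intro mult_left_mono r2) auto
    also have "\<dots> = real j * (x ^ r / fact r)"
      using j by (simp add: w_def x_def abs_mult power_abs power_divide power_mult_distrib field_simps)
    finally show "norm (\<bar>w t j r\<bar> * (real j * real r + 1)) \<le> real j * (x ^ r / fact r)" by simp
  qed
qed

definition hf :: "real \<Rightarrow> nat \<Rightarrow> nat \<Rightarrow> real" where
  "hf t j r = (if j = 1 then (if r = 0 then 1 else 0) else (if r \<le> 1 then w t j r else 0))"

definition gfac :: "real \<Rightarrow> nat \<Rightarrow> real fps" where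
  "gfac t j = Fp j (hf t j) * Fp j (w (-t) j)"

definition gM :: "real \<Rightarrow> nat \<Rightarrow> real fps" where
  "gM t M = (\<Prod>j=1..M. gfac t j)"

definition PP :: "real \<Rightarrow> nat \<Rightarrow> real" where
  "PP t M = (\<Prod>j=2..M. exp (- t / real j) * (1 + t / real j))"

lemma gfac_1: "gfac t 1 = Fp 1 (w (-t) 1)"
proof -
  have "hf t 1 = (\<lambda>r. if r = 0 then 1 else 0)" by (auto simp: hf_def)
  then show ?thesis by (simp add: gfac_def Fp_delta)
qed

lemma gfac_WS:
  assumes j: "j \<ge> 1"
  shows "WS (gfac t j)"
    and "(\<lambda>i. gfac t j $ i) sums (if j = 1 then exp (-t) else exp (- t / real j) * (1 + t / real j))"
proof -
  have A1: "WS (Fp j (w (-t) j))" using Fp_WS(1)[OF j w_weighted_summable[OF j]] .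
  have A2: "(\<lambda>i. Fp j (w (-t) j) $ i) sums exp (- t / real j)"
    using Fp_WS(2)[OF j w_weighted_summable[OF j, of "-t"]] sums_unique[OF w_sums[of "-t" j]] by simp
  note A = A1 A2
  have hz: "hf t j r = 0" if "r \<notin> {0..1}" for r using that by (simp add: hf_def)
  have hs: "(\<lambda>r. \<bar>hf t j r\<bar> * (real j * real r + 1)) = (\<lambda>r. if r \<in> {0..1} then \<bar>hf t j r\<bar> * (real j * real r + 1) else 0)"
    by (rule ext) (simp add: hz)
  have h1': "summable (\<lambda>r. if r \<in> {0..1} then \<bar>hf t j r\<bar> * (real j * real r + 1) else 0)"
    by (rule sums_summable[OF sums_If_finite_set[of "{0..1::nat}"]]) simp
  have h1: "summable (\<lambda>r. \<bar>hf t j r\<bar> * (real j * real r + 1))"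
    by (subst hs) (rule h1')
  have hsum: "(\<lambda>r. hf t j r) sums (\<Sum>r\<in>{0..1}. hf t j r)"
  proof -
    have e: "(\<lambda>r. hf t j r) = (\<lambda>r. if r \<in> {0..1} then hf t j r else 0)" by (rule ext) (simp add: hz)
    show ?thesis by (subst e) (rule sums_If_finite_set, simp)
  qed
  have B1: "WS (Fp j (hf t j))" using Fp_WS(1)[OF j h1] .
  have B2: "(\<lambda>i. Fp j (hf t j) $ i) sums (\<Sum>r\<in>{0..1}. hf t j r)"
    using Fp_WS(2)[OF j h1] unfolding sums_unique[OF hsum, symmetric] .
  note B = B1 B2
  show "WS (gfac t j)" unfolding gfac_def by (rule WS_mult(1)[OF B(1) A(1)])
  have "(\<lambda>i. (Fp j (hf t j) * Fp j (w (-t) j)) $ i) sums ((\<Sum>r\<in>{0..1}. hf t j r) * exp (- t / real j))"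
    using WS_mult(3)[OF B(1) A(1)] unfolding sums_unique[OF B(2), symmetric] sums_unique[OF A(2), symmetric] .
  then have "(\<lambda>i. gfac t j $ i) sums ((\<Sum>r\<in>{0..1}. hf t j r) * exp (- t / real j))"
    by (simp add: gfac_def)
  moreover have "(\<Sum>r\<in>{0..1}. hf t j r) = (if j = 1 then 1 else 1 + t / real j)"
    by (simp add: hf_def w_def)
  ultimately show "(\<lambda>i. gfac t j $ i) sums (if j = 1 then exp (-t) else exp (- t / real j) * (1 + t / real j))"
    by (auto simp: mult.commute)
qed

lemma gM_WS:
  "WS (gM t (Suc M)) \<and> (\<lambda>i. gM t (Suc M) $ i) sums (exp (-t) * PP t (Suc M))"
proof (induction M)
  case 0
  then show ?case using gfac_WS[of 1 t] by (simp add: gM_def PP_def)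
next
  case (Suc M)
  have g: "gM t (Suc (Suc M)) = gM t (Suc M) * gfac t (Suc (Suc M))"
    by (simp add: gM_def mult.commute)
  have p: "PP t (Suc (Suc M)) = PP t (Suc M) * (exp (- t / real (Suc (Suc M))) * (1 + t / real (Suc (Suc M))))"
    by (simp add: PP_def mult.commute)
  have F: "WS (gfac t (Suc (Suc M)))"
      "(\<lambda>i. gfac t (Suc (Suc M)) $ i) sums (exp (- t / real (Suc (Suc M))) * (1 + t / real (Suc (Suc M))))"
    using gfac_WS[of "Suc (Suc M)" t] by auto
  have G: "WS (gM t (Suc M))" "(\<lambda>i. gM t (Suc M) $ i) sums (exp (-t) * PP t (Suc M))" using Suc by auto
  have S: "(\<lambda>i. (gM t (Suc M) * gfac t (Suc (Suc M))) $ i) sums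
     ((exp (-t) * PP t (Suc M)) * (exp (- t / real (Suc (Suc M))) * (1 + t / real (Suc (Suc M)))))"
    using WS_mult(3)[OF G(1) F(1)] unfolding sums_unique[OF G(2), symmetric] sums_unique[OF F(2), symmetric] .
  show ?case
    using WS_mult(1)[OF G(1) F(1)] S unfolding g p by (simp add: mult.assoc)
qed

lemma gM_conv_lim:
  assumes t: "t > 0" and M: "M \<ge> 1"
  shows "(\<lambda>n. (gM t M * E t n) $ n / a t n) \<longlonglongrightarrow> exp (-t) * PP t M"
proof -
  obtain M' where M': "M = Suc M'" using M by (cases M) auto
  have W: "WS (gM t M)" "(\<lambda>i. gM t M $ i) sums (exp (-t) * PP t M)" using gM_WS[of t M'] M' by auto
  have "(\<lambda>n. (\<Sum>i=0..n. gM t M $ i * a t (n - i)) / a t n) \<longlonglongrightarrow> suminf (\<lambda>i. gM t M $ i)"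
    using W(1) by (intro conv_lim t) (simp add: WS_def)
  moreover have "(gM t M * E t n) $ n = (\<Sum>i=0..n. gM t M $ i * a t (n - i))" for n
    by (simp add: fps_mult_nth E_eq_a)
  ultimately show ?thesis using sums_unique[OF W(2)] by simp
qed



definition fM :: "real \<Rightarrow> nat \<Rightarrow> nat \<Rightarrow> nat \<Rightarrow> real" where
  "fM t M j = (if j \<le> M then hf t j else w t j)"

lemma prod_split_ivl:
  assumes "M \<le> N"
  shows "(\<Prod>j=1..N. f j) = (\<Prod>j=1..M. f j) * (\<Prod>j=Suc M..N. f j)"
proof -
  have "{1..N} = {1..M} \<union> {Suc M..N}" using assms by auto
  then show ?thesis by (simp add: prod.union_disjoint[symmetric] ivl_disj_int)
qed

lemma decomp:
  assumes "M \<le> N"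
  shows "(\<Prod>j=1..N. Fp j (fM t M j)) = gM t M * E t N"
proof -
  have "(\<Prod>j=1..N. Fp j (fM t M j)) = (\<Prod>j=1..M. Fp j (fM t M j)) * (\<Prod>j=Suc M..N. Fp j (fM t M j))"
    by (rule prod_split_ivl[OF assms])
  also have "(\<Prod>j=1..M. Fp j (fM t M j)) = (\<Prod>j=1..M. Fp j (hf t j))"
    by (intro prod.cong) (auto simp: fM_def)
  also have "(\<Prod>j=Suc M..N. Fp j (fM t M j)) = (\<Prod>j=Suc M..N. Fp j (w t j))"
    by (intro prod.cong) (auto simp: fM_def)
  also have "(\<Prod>j=1..M. Fp j (hf t j)) = (\<Prod>j=1..M. gfac t j * Fp j (w t j))"
  proof (intro prod.cong refl)
    fix j assume "j \<in> {1..M}"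
    then have j: "j \<ge> 1" by simp
    have "gfac t j * Fp j (w t j) = Fp j (hf t j) * (Fp j (w t j) * Fp j (w (-t) j))"
      by (simp add: gfac_def algebra_simps)
    also have "\<dots> = Fp j (hf t j)" using Fp_w_inverse[OF j, of t] by simp
    finally show "Fp j (hf t j) = gfac t j * Fp j (w t j)" by simp
  qed
  also have "\<dots> = gM t M * (\<Prod>j=1..M. Fp j (w t j))"
    by (simp add: gM_def prod.distrib)
  also have "gM t M * (\<Prod>j=1..M. Fp j (w t j)) * (\<Prod>j=Suc M..N. Fp j (w t j)) = gM t M * E t N"
    using prod_split_ivl[OF assms, of "\<lambda>j. Fp j (w t j)"] by (simp add: E_def mult.assoc)
  finally show ?thesis .
qed

lemma cyc_vecs_Vs: "cyc_vecs n = Vs n n"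
  by (simp add: cyc_vecs_def Vs_def)

lemma prod_fM:
  assumes c: "c \<in> cyc_vecs n" and M: "1 \<le> M" "M \<le> n"
  shows "(\<Prod>j=1..n. fM t M j (c j)) =
         (if c 1 = 0 \<and> (\<forall>j\<in>{2..M}. c j \<le> 1) then (\<Prod>j=1..n. w t j (c j)) else 0)"
proof (cases "c 1 = 0 \<and> (\<forall>j\<in>{2..M}. c j \<le> 1)")
  case True
  have "(\<Prod>j=1..n. fM t M j (c j)) = (\<Prod>j=1..n. w t j (c j))"
  proof (intro prod.cong refl)
    fix j assume j: "j \<in> {1..n}"
    show "fM t M j (c j) = w t j (c j)"
    proof (cases "j = 1")
      case True
      then show ?thesis using \<open>c 1 = 0 \<and> _\<close> by (simp add: fM_def hf_def w_def M)
    next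
      case False
      then show ?thesis using \<open>c 1 = 0 \<and> (\<forall>j\<in>{2..M}. c j \<le> 1)\<close> j by (auto simp: fM_def hf_def)
    qed
  qed
  then show ?thesis using True by simp
next
  case False
  then obtain j where j: "j \<in> {1..M}" "fM t M j (c j) = 0"
  proof (cases "c 1 = 0")
    case True
    with False obtain j where "j \<in> {2..M}" "\<not> c j \<le> 1" by auto
    then show ?thesis using that[of j] by (auto simp: fM_def hf_def)
  next
    case False
    then show ?thesis using that[of 1] M by (auto simp: fM_def hf_def)
  qed
  have z: "(\<Prod>j=1..n. fM t M j (c j)) = 0"
    using j M by (intro prod_zero) auto
  show ?thesis unfolding if_not_P[OF False] by (rule z)
qed

lemma D_tilde_zero: "D_tilde n c = 0 \<longleftrightarrow> (\<forall>j\<in>{2..n}. c j \<le> 1)"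
  by (auto simp: D_tilde_def)

lemma esf_event_eq:
  assumes t: "t > 0" and M: "1 \<le> M" "M \<le> n"
    and Q: "\<And>c. c \<in> cyc_vecs n \<Longrightarrow> Q c \<longleftrightarrow> c 1 = 0 \<and> (\<forall>j\<in>{2..M}. c j \<le> 1)"
  shows "esf_event t n Q = fact n / pochhammer t n * (gM t M * E t n) $ n"
proof -
  have "esf_event t n Q = (\<Sum>c\<in>{c\<in>cyc_vecs n. Q c}. fact n / pochhammer t n * (\<Prod>j=1..n. w t j (c j)))"
    by (simp add: esf_event_def esf_prob_def w_def)
  also have "\<dots> = fact n / pochhammer t n * (\<Sum>c\<in>{c\<in>cyc_vecs n. Q c}. \<Prod>j=1..n. w t j (c j))"
    by (simp add: sum_distrib_left)
  also have "(\<Sum>c\<in>{c\<in>cyc_vecs n. Q c}. \<Prod>j=1..n. w t j (c j)) =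
             (\<Sum>c\<in>cyc_vecs n. if Q c then \<Prod>j=1..n. w t j (c j) else 0)"
    by (rule sum.inter_filter) (simp add: cyc_vecs_Vs Vs_finite)
  also have "\<dots> = (\<Sum>c\<in>cyc_vecs n. \<Prod>j=1..n. fM t M j (c j))"
    using Q prod_fM[OF _ M] by (intro sum.cong) auto
  also have "\<dots> = (\<Prod>j=1..n. Fp j (fM t M j)) $ n"
    unfolding cyc_vecs_Vs by (rule Vs_sum_prod)
  also have "\<dots> = (gM t M * E t n) $ n" using decomp[OF M(2), of t] by (rule arg_cong)
  finally show ?thesis .
qed

lemma derange_eq:
  assumes t: "t > 0" and n: "n \<ge> 1"
  shows "derange_prob t n (\<lambda>c. D_tilde n c = 0) = (gM t n * E t n) $ n / (gM t 1 * E t n) $ n"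
proof -
  have N: "esf_event t n (\<lambda>c. c 1 = 0 \<and> D_tilde n c = 0) = fact n / pochhammer t n * (gM t n * E t n) $ n"
    using t n by (intro esf_event_eq) (auto simp: D_tilde_zero)
  have D: "esf_event t n (\<lambda>c. c 1 = 0) = fact n / pochhammer t n * (gM t 1 * E t n) $ n"
    using t n by (intro esf_event_eq) auto
  have "fact n / pochhammer t n \<noteq> (0::real)" using t by (simp add: pochhammer_pos less_imp_neq[symmetric])
  then show ?thesis unfolding derange_prob_def N D by simp
qed



definition fle :: "real fps \<Rightarrow> real fps \<Rightarrow> bool" where
  "fle p q \<longleftrightarrow> (\<forall>i. p $ i \<le> q $ i)"

definition fnn :: "real fps \<Rightarrow> bool" where
  "fnn p \<longleftrightarrow> (\<forall>i. 0 \<le> p $ i)"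

lemma fnn_mult: "fnn p \<Longrightarrow> fnn q \<Longrightarrow> fnn (p * q)"
  by (auto simp: fnn_def fps_mult_nth intro!: sum_nonneg)

lemma fle_refl: "fle p p" by (simp add: fle_def)

lemma fle_trans: "fle p q \<Longrightarrow> fle q r \<Longrightarrow> fle p r"
  by (auto simp: fle_def intro: order_trans)

lemma fle_add: "fle x1 y1 \<Longrightarrow> fle x2 y2 \<Longrightarrow> fle (x1 + x2) (y1 + y2)"
  by (auto simp: fle_def intro: add_mono)

lemma fle_mult_right:
  assumes "fle x y" "fnn F" shows "fle (x * F) (y * F)"
proof -
  have "fnn (y - x)" using assms(1) by (auto simp: fle_def fnn_def)
  then have "fnn ((y - x) * F)" using assms(2) by (rule fnn_mult)
  moreover have "(y - x) * F = y * F - x * F" by (simp add: algebra_simps)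
  ultimately show ?thesis by (auto simp: fle_def fnn_def)
qed

lemma fle_mult_left:
  assumes "fle x y" "fnn F" shows "fle (F * x) (F * y)"
  using fle_mult_right[OF assms] by (simp add: mult.commute)

lemma fle_mult:
  assumes "fnn p" "fnn q" "fle p p'" "fle q q'"
  shows "fle (p * q) (p' * q')"
proof -
  have "fnn p'" using assms(1,3) by (auto simp: fle_def fnn_def intro: order_trans)
  show ?thesis
    using fle_mult_right[OF assms(3) assms(2)] fle_mult_left[OF assms(4) \<open>fnn p'\<close>]
    by (rule fle_trans)
qed

lemma fnn_prod_ivl: "(\<And>j. fnn (F j)) \<Longrightarrow> fnn (\<Prod>j=1..(N::nat). F j)"
proof (induction N)
  case 0 then show ?case by (simp add: fnn_def)
next
  case (Suc N)
  then show ?case by (simp add: fnn_mult)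
qed

lemma fle_prod_ivl:
  assumes "\<And>j. fnn (F j)" "\<And>j. fle (F j) (G j)"
  shows "fle (\<Prod>j=1..(N::nat). F j) (\<Prod>j=1..N. G j)"
proof (induction N)
  case 0 then show ?case by (simp add: fle_refl)
next
  case (Suc N)
  have "fle ((\<Prod>j=1..N. F j) * F (Suc N)) ((\<Prod>j=1..N. G j) * G (Suc N))"
    by (intro fle_mult fnn_prod_ivl assms Suc.IH)
  then show ?case by simp
qed

lemma fnn_Fp: "(\<And>r. 0 \<le> f r) \<Longrightarrow> fnn (Fp j f)"
  by (simp add: fnn_def Fp_nth)

lemma fle_Fp: "(\<And>r. f r \<le> g r) \<Longrightarrow> fle (Fp j f) (Fp j g)"
  by (simp add: fle_def Fp_nth)

lemma w_nonneg: "t \<ge> 0 \<Longrightarrow> 0 \<le> w t j r" by (simp add: w_def)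

lemma hf_nonneg: "t \<ge> 0 \<Longrightarrow> 0 \<le> hf t j r" by (simp add: hf_def w_def)

lemma hf_le_w: "t \<ge> 0 \<Longrightarrow> hf t j r \<le> w t j r" by (simp add: hf_def w_def)

lemma fM_nonneg: "t \<ge> 0 \<Longrightarrow> 0 \<le> fM t M j r" by (simp add: fM_def hf_nonneg w_nonneg)

lemma fM_le_w: "t \<ge> 0 \<Longrightarrow> fM t M j r \<le> w t j r" by (simp add: fM_def hf_le_w)

lemma hf_le_fM: "t \<ge> 0 \<Longrightarrow> hf t j r \<le> fM t M j r" by (simp add: fM_def hf_le_w)

definition cc :: "real \<Rightarrow> nat \<Rightarrow> real" where
  "cc t k = (t / real k) ^ 2 / 2"

lemma w_tail_ineq:
  assumes "t \<ge> 0" "r \<ge> 2"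
  shows "w t j r \<le> cc t j * w t j (r - 2)"
proof -
  obtain q where q: "r = q + 2" using assms(2) by (metis add.commute le_Suc_ex)
  define x where "x = t / real j"
  have x: "x \<ge> 0" using assms by (simp add: x_def)
  have f: "fact (q + 2) = real (q + 2) * real (q + 1) * (fact q :: real)"
    by (simp add: algebra_simps)
  have f2: "2 * (fact q :: real) \<le> fact (q + 2)"
  proof -
    have "2 \<le> real (q + 2) * real (q + 1)"
    proof -
      have "(2::real) * 1 \<le> real (q + 2) * real (q + 1)" by (intro mult_mono) auto
      then show ?thesis by simp
    qed
    then have "2 * (fact q :: real) \<le> real (q + 2) * real (q + 1) * fact q"
      by (intro mult_right_mono) auto
    then show ?thesis using f by simp
  qed
  have "w t j r = x ^ (q + 2) / fact (q + 2)" by (simp add: w_def q x_def)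
  also have "\<dots> \<le> x ^ (q + 2) / (2 * fact q)"
    using f2 x by (intro divide_left_mono) auto
  also have "\<dots> = cc t j * w t j (r - 2)"
    by (simp add: cc_def w_def q x_def power_add power2_eq_square field_simps)
  finally show ?thesis .
qed

lemma cc_nonneg: "0 \<le> cc t j" by (simp add: cc_def)

lemma Fp_tail:
  assumes t: "t \<ge> 0" and j: "j \<ge> 2"
  shows "fle (Fp j (w t j) - Fp j (hf t j)) (fps_const (cc t j) * (fps_X ^ (2 * j) * Fp j (w t j)))"
  unfolding fle_def
proof
  fix m
  have RHS: "(fps_const (cc t j) * (fps_X ^ (2 * j) * Fp j (w t j))) $ m =
    cc t j * (if m < 2 * j then 0 else Fp j (w t j) $ (m - 2 * j))"
    by (simp add: fps_X_power_mult_nth)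
  have Rnn: "0 \<le> (fps_const (cc t j) * (fps_X ^ (2 * j) * Fp j (w t j))) $ m"
    unfolding RHS using t by (auto simp: Fp_nth w_nonneg cc_nonneg)
  show "(Fp j (w t j) - Fp j (hf t j)) $ m \<le> (fps_const (cc t j) * (fps_X ^ (2 * j) * Fp j (w t j))) $ m"
  proof (cases "j dvd m \<and> m div j \<ge> 2")
    case True
    then obtain r where r: "m = j * r" "r \<ge> 2" using j by (auto elim!: dvdE)
    have mj: "m div j = r" using r j by simp
    have "\<not> m < 2 * j" using r by (metis mult.commute mult_le_mono2 not_le)
    moreover have "m - 2 * j = j * (r - 2)" using r by (simp add: right_diff_distrib')
    ultimately have e1: "(fps_const (cc t j) * (fps_X ^ (2 * j) * Fp j (w t j))) $ m = cc t j * w t j (r - 2)"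
      unfolding RHS using j by (simp add: Fp_nth)
    have e2: "(Fp j (w t j) - Fp j (hf t j)) $ m = w t j r"
      using r j mj by (simp add: Fp_nth hf_def)
    show ?thesis unfolding e1 e2 using w_tail_ineq[OF t r(2)] .
  next
    case False
    have "(Fp j (w t j) - Fp j (hf t j)) $ m = 0"
      using False j by (auto simp: Fp_nth hf_def)
    then show ?thesis using Rnn by simp
  qed
qed



definition AA :: "real \<Rightarrow> nat \<Rightarrow> real fps" where
  "AA t N = (\<Prod>j=1..N. Fp j (hf t j))"
definition BB :: "real \<Rightarrow> nat \<Rightarrow> nat \<Rightarrow> real fps" where
  "BB t M N = (\<Prod>j=1..N. Fp j (fM t M j))"
definition SS :: "real \<Rightarrow> nat \<Rightarrow> nat \<Rightarrow> real fps" where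
  "SS t M N = (\<Sum>k\<in>{Suc M..N}. fps_const (cc t k) * fps_X ^ (2 * k)) * E t N"

lemma fnn_E: "t \<ge> 0 \<Longrightarrow> fnn (E t N)"
  unfolding E_def by (intro fnn_prod_ivl fnn_Fp w_nonneg)

lemma fnn_AA: "t \<ge> 0 \<Longrightarrow> fnn (AA t N)"
  unfolding AA_def by (intro fnn_prod_ivl fnn_Fp hf_nonneg)

lemma fle_AA_E: "t \<ge> 0 \<Longrightarrow> fle (AA t N) (E t N)"
  unfolding AA_def E_def by (intro fle_prod_ivl fnn_Fp hf_nonneg fle_Fp hf_le_w)

lemma fle_AA_BB: "t \<ge> 0 \<Longrightarrow> fle (AA t N) (BB t M N)"
  unfolding AA_def BB_def by (intro fle_prod_ivl fnn_Fp hf_nonneg fle_Fp hf_le_fM)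

lemma fnn_SS: "t \<ge> 0 \<Longrightarrow> fnn (SS t M N)"
  unfolding SS_def
proof (rule fnn_mult[OF _ fnn_E])
  show "fnn (\<Sum>k\<in>{Suc M..N}. fps_const (cc t k) * fps_X ^ (2 * k))"
    by (auto simp: fnn_def fps_sum_nth fps_X_power_nth cc_nonneg intro!: sum_nonneg)
qed

lemma main_ineq:
  assumes t: "t \<ge> 0" and M: "M \<ge> 1"
  shows "fle (BB t M N - AA t N) (SS t M N)"
proof (induction N)
  case 0
  then show ?case by (simp add: BB_def AA_def SS_def fle_def)
next
  case (Suc N)
  define j where "j = Suc N"
  define H where "H = Fp j (hf t j)"
  define FB where "FB = Fp j (fM t M j)"
  define W where "W = Fp j (w t j)"
  have A': "AA t (Suc N) = AA t N * H" by (simp add: AA_def H_def j_def)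
  have B': "BB t M (Suc N) = BB t M N * FB" by (simp add: BB_def FB_def j_def)
  have E': "E t (Suc N) = E t N * W" by (simp add: E_def W_def j_def)
  have eq: "BB t M (Suc N) - AA t (Suc N) = (BB t M N - AA t N) * FB + AA t N * (FB - H)"
    by (simp add: A' B' algebra_simps)
  have fnnFB: "fnn FB" unfolding FB_def using t by (intro fnn_Fp fM_nonneg)
  have t1: "fle ((BB t M N - AA t N) * FB) (SS t M N * W)"
  proof (rule fle_trans)
    show "fle ((BB t M N - AA t N) * FB) (SS t M N * FB)" by (rule fle_mult_right[OF Suc.IH fnnFB])
    show "fle (SS t M N * FB) (SS t M N * W)"
      unfolding FB_def W_def using t by (intro fle_mult_left fle_Fp fM_le_w fnn_SS)
  qed
  show ?case
  proof (cases "j \<le> M")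
    case True
    have FBH: "FB = H" using True by (simp add: FB_def H_def fM_def)
    have "{Suc M..Suc N} = {Suc M..N}" using True by (auto simp: j_def)
    then have SS': "SS t M (Suc N) = SS t M N * W" by (simp add: SS_def E' mult.assoc)
    show ?thesis unfolding eq SS' FBH using t1 FBH by simp
  next
    case False
    have FBW: "FB = W" using False by (simp add: FB_def W_def fM_def)
    have j2: "j \<ge> 2" using False M by simp
    have SS': "SS t M (Suc N) = SS t M N * W + E t N * (fps_const (cc t j) * (fps_X ^ (2 * j) * W))"
    proof -
      have "(\<Sum>k\<in>{Suc M..Suc N}. fps_const (cc t k) * fps_X ^ (2 * k)) =
            (\<Sum>k\<in>{Suc M..N}. fps_const (cc t k) * fps_X ^ (2 * k)) + fps_const (cc t j) * fps_X ^ (2 * j)"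
        using False by (simp add: j_def)
      then show ?thesis by (simp add: SS_def E' algebra_simps)
    qed
    have fnnWH: "fnn (W - H)"
      using fle_Fp[of "hf t j" "w t j" j] hf_le_w[OF t] by (auto simp: fle_def fnn_def W_def H_def)
    have t2: "fle (AA t N * (W - H)) (E t N * (fps_const (cc t j) * (fps_X ^ (2 * j) * W)))"
      using fle_mult[OF fnn_AA[OF t] fnnWH fle_AA_E[OF t] Fp_tail[OF t j2, folded W_def H_def]] .
    show ?thesis unfolding eq SS' FBW using fle_add[OF t1[unfolded FBW] t2] .
  qed
qed

lemma coeff_compare:
  assumes t: "t > 0" and M: "1 \<le> M" "M \<le> n"
  shows "0 \<le> (gM t M * E t n) $ n - (gM t n * E t n) $ n"
    and "(gM t M * E t n) $ n - (gM t n * E t n) $ n \<le>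
           (\<Sum>k\<in>{Suc M..n}. cc t k * (if n < 2 * k then 0 else a t (n - 2 * k)))"
proof -
  have B: "BB t M n = gM t M * E t n" unfolding BB_def by (rule decomp[OF M(2)])
  have "AA t n = BB t n n" unfolding AA_def BB_def by (intro prod.cong) (auto simp: fM_def)
  then have A: "AA t n = gM t n * E t n" unfolding BB_def using decomp[of n n t] by simp
  show "0 \<le> (gM t M * E t n) $ n - (gM t n * E t n) $ n"
    using fle_AA_BB[of t n M] t unfolding A B fle_def by auto
  have "(gM t M * E t n) $ n - (gM t n * E t n) $ n \<le> SS t M n $ n"
    using main_ineq[of t M n] t M unfolding A B fle_def by auto
  also have "SS t M n $ n = (\<Sum>k\<in>{Suc M..n}. cc t k * (if n < 2 * k then 0 else a t (n - 2 * k)))"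
    unfolding SS_def sum_distrib_right fps_sum_nth
  proof (intro sum.cong refl)
    fix k assume k: "k \<in> {Suc M..n}"
    have "(fps_const (cc t k) * fps_X ^ (2 * k) * E t n) $ n = cc t k * (fps_X ^ (2 * k) * E t n) $ n"
      by (simp add: mult.assoc)
    also have "\<dots> = cc t k * (if n < 2 * k then 0 else a t (n - 2 * k))"
      by (simp add: fps_X_power_mult_nth E_eq_a)
    finally show "(fps_const (cc t k) * fps_X ^ (2 * k) * E t n) $ n = cc t k * (if n < 2 * k then 0 else a t (n - 2 * k))" .
  qed
  finally show "(gM t M * E t n) $ n - (gM t n * E t n) $ n \<le>
           (\<Sum>k\<in>{Suc M..n}. cc t k * (if n < 2 * k then 0 else a t (n - 2 * k)))" .
qed



lemma aux_PP:
  fixes X Y P t :: real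
  assumes "X \<noteq> 0" "Y \<noteq> 0" "P \<noteq> 0" "t \<noteq> 0" "1 + t \<noteq> 0"
  shows "P = (X / (t * (1 + t) * Y)) / (X / t * inverse (Y * (1 + t) * P))"
proof -
  have Z: "t * (1 + t) * Y \<noteq> 0" using assms by simp
  have e1: "X / t * inverse (Y * (1 + t) * P) = X / ((t * (1 + t) * Y) * P)"
    by (simp add: divide_inverse mult_ac)
  have g: "P = (X / Z) / (X / (Z * P))" if "Z \<noteq> 0" for Z
    using that assms by (simp add: field_simps)
  show ?thesis unfolding e1 by (rule g[OF Z])
qed

lemma PP_lim:
  assumes t: "t > 0"
  shows "PP t \<longlonglongrightarrow> exp (- t * (euler_mascheroni - 1)) / Gamma (t + 2)"
proof -
  have nz: "x \<notin> \<int>\<^sub>\<le>\<^sub>0" if "x > 0" for x :: real using that nonpos_Ints_nonpos by force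
  have G2: "Gamma (t + 2) = (t + 1) * t * Gamma t"
  proof -
    have "Gamma (t + 2) = Gamma ((t + 1) + 1)" by (simp add: add.assoc)
    also have "\<dots> = (t + 1) * Gamma (t + 1)" using t by (intro Gamma_plus1 nz) simp
    also have "Gamma (t + 1) = t * Gamma t" using t by (intro Gamma_plus1 nz)
    finally show ?thesis by simp
  qed
  define C where "C = exp (- euler_mascheroni * t) / (t * (1 + t) * exp (- t))"
  have eq: "PP t M = C / Gamma_series_Weierstrass t M" if "M \<ge> 1" for M
  proof -
    have pos: "(1 + t / real k) > 0" for k using t by (simp add: add_pos_nonneg)
    have "(\<Prod>k=1..M. exp (t / real k) / (1 + t / real k)) =
          (\<Prod>k=1..M. inverse (exp (- t / real k) * (1 + t / real k)))"
      by (intro prod.cong refl) (simp add: exp_minus field_simps)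
    also have "\<dots> = inverse (\<Prod>k=1..M. exp (- t / real k) * (1 + t / real k))"
      using prod_inversef[of "\<lambda>k. exp (- t / real k) * (1 + t / real k)" "{1..M}"] by (simp add: o_def)
    also have "(\<Prod>k=1..M. exp (- t / real k) * (1 + t / real k)) =
               (exp (- t) * (1 + t)) * PP t M"
    proof -
      have "{1..M} = insert 1 {2..M}" using that by auto
      then show ?thesis by (simp add: PP_def)
    qed
    finally have "Gamma_series_Weierstrass t M =
        exp (- euler_mascheroni * t) / t * inverse (exp (- t) * (1 + t) * PP t M)"
      by (simp add: Gamma_series_Weierstrass_def)
    moreover have "PP t M > 0" unfolding PP_def using t by (intro prod_pos) (auto simp: add_pos_nonneg)
    ultimately show ?thesis unfolding C_def using t
      by (subst aux_PP[of "exp (- euler_mascheroni * t)" "exp (- t)" "PP t M" t]) auto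
  qed
  have "(\<lambda>M. C / Gamma_series_Weierstrass t M) \<longlonglongrightarrow> C / Gamma t"
    using t by (intro tendsto_intros Gamma_Weierstrass_real) (simp add: less_imp_neq[symmetric])
  then have "PP t \<longlonglongrightarrow> C / Gamma t"
  proof (rule Lim_transform_eventually)
    show "\<forall>\<^sub>F M in sequentially. C / Gamma_series_Weierstrass t M = PP t M"
      using eventually_ge_at_top[of 1] by eventually_elim (simp add: eq)
  qed
  moreover have "C / Gamma t = exp (- t * (euler_mascheroni - 1)) / Gamma (t + 2)"
    using t by (simp add: C_def G2 exp_diff exp_minus field_simps exp_add[symmetric] algebra_simps)
  ultimately show ?thesis by simp
qed


lemma inv_sq_sum:
  assumes "1 \<le> M" "M \<le> n"
  shows "(\<Sum>k\<in>{Suc M..n}. 1 / (real k)^2) \<le> 1 / real M - 1 / real n"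
  using assms(2)
proof (induction n rule: dec_induct)
  case base
  then show ?case by simp
next
  case (step n)
  have n1: "real n \<ge> 1" using step.hyps assms(1) by simp
  have "(\<Sum>k\<in>{Suc M..Suc n}. 1 / (real k)^2) = (\<Sum>k\<in>{Suc M..n}. 1 / (real k)^2) + 1 / (real (Suc n))^2"
    using step.hyps by simp
  also have "\<dots> \<le> 1 / real M - 1 / real n + 1 / (real (Suc n))^2" using step.IH by simp
  also have "1 / (real (Suc n))^2 \<le> 1 / real n - 1 / real (Suc n)"
  proof -
    have "1 / real n - 1 / real (Suc n) = 1 / (real n * real (Suc n))" using n1 by (simp add: field_simps)
    also have "\<dots> \<ge> 1 / (real (Suc n))^2"
      using n1 by (intro divide_left_mono) (auto simp: power2_eq_square intro!: mult_pos_pos)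
    finally show ?thesis .
  qed
  finally show ?case by simp
qed

lemma a_shift_sum:
  assumes t: "t > 0"
  shows "(\<Sum>k\<in>{Suc M..n}. (if n < 2 * k then 0 else a t (n - 2 * k))) \<le> a t n * (t + real n) / t"
proof -
  define K where "K = {k\<in>{Suc M..n}. \<not> n < 2 * k}"
  have "(\<Sum>k\<in>{Suc M..n}. (if n < 2 * k then 0 else a t (n - 2 * k))) = (\<Sum>k\<in>K. a t (n - 2 * k))"
    unfolding K_def by (subst sum.inter_filter) (auto intro!: sum.cong)
  also have "\<dots> = (\<Sum>m\<in>(\<lambda>k. n - 2 * k) ` K. a t m)"
    by (subst sum.reindex) (auto simp: K_def inj_on_def)
  also have "\<dots> \<le> (\<Sum>m\<in>{0..n}. a t m)"
    using a_pos[OF t] by (intro sum_mono2) (auto simp: less_imp_le)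
  also have "\<dots> = a t n * (t + real n) / t" by (rule a_sum_eq[OF t])
  finally show ?thesis .
qed

lemma tail_bound:
  assumes t: "t > 0" and M: "1 \<le> M" "M \<le> n"
  shows "(\<Sum>k\<in>{Suc M..n}. cc t k * (if n < 2 * k then 0 else a t (n - 2 * k)))
         \<le> a t n * (t^2 / real M + 8 * t * (t + real n) / (real n)^2)"
proof -
  define X where "X = (\<lambda>k. if n < 2 * k then 0 else a t (n - 2 * k))"
  have Xnn: "X k \<ge> 0" for k using a_pos[OF t] by (simp add: X_def less_imp_le)
  have n1: "real n \<ge> 1" using M by simp
  have tm: "cc t k * X k \<le> a t n * t^2 * (1 / (real k)^2) + (8 * t^2 / (real n)^2) * X k"
    if k: "k \<in> {Suc M..n}" for k
  proof -
    have k1: "real k \<ge> 1" using k M by simp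
    have nn1: "0 \<le> a t n * t^2 * (1 / (real k)^2)" using a_pos[OF t, of n] by simp
    have nn2: "0 \<le> (8 * t^2 / (real n)^2) * X k" using Xnn[of k] by simp
    show ?thesis
    proof (cases "n < 2 * k")
      case True
      then show ?thesis using nn1 nn2 by (simp add: X_def)
    next
      case False
      show ?thesis
      proof (cases "4 * k \<le> n")
        case True
        have ah: "a t (n - 2 * k) \<le> 2 * a t n" using True by (intro a_half_bound t) auto
        have "cc t k * X k = (t / real k)^2 / 2 * a t (n - 2 * k)"
          using False by (simp add: X_def cc_def)
        also have "\<dots> \<le> (t / real k)^2 / 2 * (2 * a t n)"
          by (intro mult_left_mono ah) simp
        also have "\<dots> = a t n * t^2 * (1 / (real k)^2)" by (simp add: power_divide)
        finally show ?thesis using nn2 by simp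
      next
        case False
        have "real n < 4 * real k" using False by simp
        then have "(real n)^2 \<le> (4 * real k)^2" using n1 by (intro power_mono) auto
        then have "(t / real k)^2 / 2 \<le> 8 * t^2 / (real n)^2"
          using k1 n1 by (simp add: power_divide field_simps mult_left_mono)
        then have "cc t k * X k \<le> (8 * t^2 / (real n)^2) * X k"
          unfolding cc_def by (intro mult_right_mono Xnn)
        then show ?thesis using nn1 by simp
      qed
    qed
  qed
  have "(\<Sum>k\<in>{Suc M..n}. cc t k * X k) \<le>
        (\<Sum>k\<in>{Suc M..n}. a t n * t^2 * (1 / (real k)^2) + (8 * t^2 / (real n)^2) * X k)"
    by (intro sum_mono tm)
  also have "\<dots> = a t n * t^2 * (\<Sum>k\<in>{Suc M..n}. 1 / (real k)^2) + (8 * t^2 / (real n)^2) * (\<Sum>k\<in>{Suc M..n}. X k)"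
    by (simp add: sum.distrib sum_distrib_left)
  also have "\<dots> \<le> a t n * t^2 * (1 / real M) + (8 * t^2 / (real n)^2) * (a t n * (t + real n) / t)"
  proof (intro add_mono mult_left_mono)
    show "(\<Sum>k\<in>{Suc M..n}. 1 / (real k)^2) \<le> 1 / real M"
    proof -
      have "0 \<le> 1 / real n" by simp
      then show ?thesis using inv_sq_sum[OF M] by linarith
    qed
    show "(\<Sum>k\<in>{Suc M..n}. X k) \<le> a t n * (t + real n) / t"
      unfolding X_def by (rule a_shift_sum[OF t])
  qed (use a_pos[OF t, of n] in auto)
  also have "\<dots> = a t n * (t^2 / real M + 8 * t * (t + real n) / (real n)^2)"
  proof -
    have "real n \<noteq> 0" using n1 by simp
    then show ?thesis using t by (simp add: field_simps power2_eq_square)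
  qed
  finally show ?thesis by (simp add: X_def)
qed



lemma Num_lim:
  assumes t: "t > 0"
  shows "(\<lambda>n. (gM t n * E t n) $ n / a t n) \<longlonglongrightarrow> exp (- t) * (exp (- t * (euler_mascheroni - 1)) / Gamma (t + 2))"
proof (rule LIMSEQ_I)
  define P where "P = exp (- t * (euler_mascheroni - 1)) / Gamma (t + 2)"
  fix r :: real assume r: "r > 0"
  have r4: "r / 4 > 0" using r by simp
  obtain M1 where M1: "\<forall>M\<ge>M1. norm (PP t M - P) < r / 4"
    using LIMSEQ_D[OF PP_lim[OF t] r4] unfolding P_def by blast
  obtain M2 :: nat where M2: "t^2 / (r / 4) < real M2" using reals_Archimedean2 by blast
  define M where "M = max (max M1 M2) 1"
  have M1': "M \<ge> 1" and MM1: "M \<ge> M1" and MM2: "M \<ge> M2" by (auto simp: M_def)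
  have hM1: "\<bar>PP t M - P\<bar> < r / 4" using M1 MM1 by auto
  have hM2: "t^2 / real M < r / 4"
  proof -
    have "t^2 / (r / 4) < real M" using M2 MM2 by linarith
    then have "t^2 < real M * (r / 4)" using r by (simp add: field_simps)
    then show ?thesis using M1' by (simp add: field_simps)
  qed
  obtain n1 where n1: "\<forall>n\<ge>n1. norm ((gM t M * E t n) $ n / a t n - exp (- t) * PP t M) < r / 4"
    using LIMSEQ_D[OF gM_conv_lim[OF t M1'] r4] by blast
  obtain n2 :: nat where n2: "32 * t * (t + 1) / r < real n2" using reals_Archimedean2 by blast
  show "\<exists>no. \<forall>n\<ge>no. norm ((gM t n * E t n) $ n / a t n - exp (- t) * P) < r"
  proof (intro exI allI impI)
    fix n assume n: "n \<ge> max (max n1 n2) (max M 1)"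
    have nM: "M \<le> n" and nn1: "n \<ge> n1" and nn2: "n \<ge> n2" and n1': "n \<ge> 1" using n by auto
    define G where "G = (gM t M * E t n) $ n"
    define N where "N = (gM t n * E t n) $ n"
    define an where "an = a t n"
    have an: "an > 0" using a_pos[OF t] by (simp add: an_def)
    have c1: "0 \<le> G - N" using coeff_compare(1)[OF t M1' nM] by (simp add: G_def N_def)
    have c2: "G - N \<le> an * (t^2 / real M + 8 * t * (t + real n) / (real n)^2)"
      using coeff_compare(2)[OF t M1' nM] tail_bound[OF t M1' nM] by (simp add: G_def N_def an_def)
    have rn: "8 * t * (t + real n) / (real n)^2 < r / 4"
    proof -
      have rn1: "real n \<ge> 1" using n1' by simp
      have "t + real n \<le> (t + 1) * real n" using rn1 t by (simp add: algebra_simps)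
      then have "8 * t * (t + real n) \<le> 8 * t * ((t + 1) * real n)" using t by simp
      then have "8 * t * (t + real n) / (real n)^2 \<le> 8 * t * ((t + 1) * real n) / (real n)^2"
        by (intro divide_right_mono) auto
      also have "\<dots> = 8 * t * (t + 1) / real n" using rn1 by (simp add: power2_eq_square)
      also have "\<dots> < r / 4"
      proof -
        have "32 * t * (t + 1) / r < real n" using n2 nn2 by linarith
        then have "32 * t * (t + 1) < real n * r" using r by (simp add: field_simps)
        then show ?thesis using rn1 by (simp add: field_simps)
      qed
      finally show ?thesis .
    qed
    have d1: "\<bar>N / an - G / an\<bar> < r / 2"
    proof -
      have "\<bar>N / an - G / an\<bar> = (G - N) / an" using c1 an by (simp add: field_simps abs_if)
      also have "\<dots> \<le> t^2 / real M + 8 * t * (t + real n) / (real n)^2"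
        using c2 an by (simp add: field_simps)
      also have "\<dots> < r / 2" using hM2 rn by linarith
      finally show ?thesis .
    qed
    have d2: "\<bar>G / an - exp (- t) * PP t M\<bar> < r / 4" using n1 nn1 by (simp add: G_def an_def)
    have d3: "\<bar>exp (- t) * PP t M - exp (- t) * P\<bar> < r / 4"
    proof -
      have "\<bar>exp (- t) * PP t M - exp (- t) * P\<bar> = exp (- t) * \<bar>PP t M - P\<bar>"
        by (simp add: abs_mult right_diff_distrib[symmetric])
      also have "\<dots> \<le> \<bar>PP t M - P\<bar>" using t by (intro mult_left_le_one_le) auto
      finally show ?thesis using hM1 by simp
    qed
    have "\<bar>N / an - exp (- t) * P\<bar> < r" using d1 d2 d3 by linarith
    then show "norm ((gM t n * E t n) $ n / a t n - exp (- t) * P) < r"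
      by (simp add: N_def an_def)
  qed
qed

lemma Den_lim:
  assumes t: "t > 0"
  shows "(\<lambda>n. (gM t 1 * E t n) $ n / a t n) \<longlonglongrightarrow> exp (- t)"
  using gM_conv_lim[OF t, of 1] by (simp add: PP_def)

theorem mainTheorem13:
  fixes \<theta> :: real
  assumes "\<theta> > 0"
  shows "(\<lambda>n. derange_prob \<theta> n (\<lambda>c. D_tilde n c = 0))
           \<longlonglongrightarrow> exp (- \<theta> * (euler_mascheroni - 1)) / Gamma (\<theta> + 2)
       \<and> (\<lambda>N. \<Prod>j=2..N. exp (- \<theta> / real j) * (1 + \<theta> / real j))
           \<longlonglongrightarrow> exp (- \<theta> * (euler_mascheroni - 1)) / Gamma (\<theta> + 2)"
proof
  have t: "\<theta> > 0" by (fact assms)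
  define P where "P = exp (- \<theta> * (euler_mascheroni - 1)) / Gamma (\<theta> + 2)"
  have "(\<lambda>n. ((gM \<theta> n * E \<theta> n) $ n / a \<theta> n) / ((gM \<theta> 1 * E \<theta> n) $ n / a \<theta> n))
          \<longlonglongrightarrow> (exp (- \<theta>) * P) / exp (- \<theta>)"
    unfolding P_def by (intro tendsto_divide Num_lim Den_lim t) simp
  then have L: "(\<lambda>n. ((gM \<theta> n * E \<theta> n) $ n / a \<theta> n) / ((gM \<theta> 1 * E \<theta> n) $ n / a \<theta> n)) \<longlonglongrightarrow> P"
    by simp
  show "(\<lambda>n. derange_prob \<theta> n (\<lambda>c. D_tilde n c = 0)) \<longlonglongrightarrow> exp (- \<theta> * (euler_mascheroni - 1)) / Gamma (\<theta> + 2)"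
    unfolding P_def[symmetric]
  proof (rule Lim_transform_eventually[OF L])
    show "\<forall>\<^sub>F n in sequentially. (gM \<theta> n * E \<theta> n) $ n / a \<theta> n / ((gM \<theta> 1 * E \<theta> n) $ n / a \<theta> n) =
            derange_prob \<theta> n (\<lambda>c. D_tilde n c = 0)"
      using eventually_ge_at_top[of 1]
    proof eventually_elim
      case (elim n)
      have "a \<theta> n \<noteq> 0" using a_pos[OF t, of n] by simp
      then show ?case using derange_eq[OF t elim] by simp
    qed
  qed
  have "PP \<theta> = (\<lambda>N. \<Prod>j=2..N. exp (- \<theta> / real j) * (1 + \<theta> / real j))"
    by (rule ext) (simp add: PP_def)
  then show "(\<lambda>N. \<Prod>j=2..N. exp (- \<theta> / real j) * (1 + \<theta> / real j))
           \<longlonglongrightarrow> exp (- \<theta> * (euler_mascheroni - 1)) / Gamma (\<theta> + 2)"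
    using PP_lim[OF t] by simp
qed


end
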